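(* Let $X$ be a real Hausdorff locally convex topological vector space, let $f:X\to\overline{\mathbb R}$ be proper and let $U\subseteq\operatorname{dom} f$ be dense in $\operatorname{dom} f$. (a) $\overline{f_U}$ is lower semicontinuous, $U$ is graphically dense in $\operatorname{dom}\overline{f_U}$ with respect to $\overline{f_U}$, and $\inf_{x\in U}f(x)=\inf_{x\in X}\overline{f_U}(x)$. (b) If $f$ is lower semicontinuous on $U$, then $f(u)=\overline{f_U}(u)$ for all $u\in U$. If moreover $f$ is lower semicontinuous on $X$, then $\operatorname{dom}\overline{f_U}\subseteq\operatorname{dom} f$ and $\overline{f_U}(x)\ge f(x)$ for all $x\in X$; furthermore, in this case $\overline{f_U}=f$ on $X$ if and only if $U$ is graphically dense in $\operatorname{dom} f$ with respect to $f$. (c) If $\operatorname{dom} f$ is convex, $U$ is self-segment-dense in $\operatorname{dom} f$ and $f$ is convex on $U$, then $\overline{f_U}$ is convex and $\operatorname{epi} f_U$ is self-segment-dense in $\operatorname{epi}\overline{f_U}$.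
   Context: $\overline{\mathbb R}=\mathbb R\cup\{\pm\infty\}$; $\operatorname{dom} f=\{x:f(x)<+\infty\}$; $\operatorname{epi} f=\{(x,r)\in X\times\mathbb R:f(x)\le r\}$; $f$ is proper if $\operatorname{dom} f\ne\emptyset$ and $f>-\infty$ everywhere. For $U\subseteq\operatorname{dom} f$: $\operatorname{epi} f_U=\{(u,r)\in U\times\mathbb R: f(u)\le r\}$ and $\overline{f_U}:X\to\overline{\mathbb R}$ is the function whose epigraph is $\operatorname{cl}(\operatorname{epi} f_U)$ (closure in $X\times\mathbb R$), i.e. $\overline{f_U}(x)=\inf\{r:(x,r)\in\operatorname{cl}(\operatorname{epi} f_U)\}$ with $\inf\emptyset=+\infty$. Lower semicontinuity at $x$: for every net $x_i\to x$, $\liminf f(x_i)\ge f(x)$; "lower semicontinuous on $U$" means lower semicontinuous at each point of $U$ (with respect to nets in $U$). Given a function $g$ and $U\subseteq\operatorname{dom} g$, $U$ is graphically dense in $\operatorname{dom} g$ (w.r.t. $g$) if for every $x\in\operatorname{dom} g$ there is a net $(u_i)\subseteq U$ with $u_i\to x$ and $g(u_i)\to g(x)$. $f$ is convex on $U$ if $f((1-t)u+tv)\le(1-t)f(u)+tf(v)$ whenever $u,v\in U$, $t\in[0,1]$ and $(1-t)u+tv\in U$ ($U$ need not be convex). Convexity of $\overline{\mathbb R}$-valued functions uses the conventions $(+\infty)+(-\infty)=+\infty$, $0\cdot(+\infty)=+\infty$, $0\cdot(-\infty)=0$. $[x,y]=\{x+t(y-x):t\in[0,1]\}$. Self-segment-dense: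 for convex $V$ and $U\subseteq V$, $U$ is self-segment-dense in $V$ if $V\subseteq\operatorname{cl}U$ and for all $x,y\in U$, $[x,y]\cap U$ is dense in $[x,y]$. *)

theory Defs
  imports "HOL-Analysis.Analysis"
begin

definition lctvs :: "'a::{real_vector,t2_space} itself \<Rightarrow> bool" where
  "lctvs (T::'a itself) \<longleftrightarrow>
     continuous_on UNIV (\<lambda>(x::'a, y::'a). x + y)
   \<and> continuous_on UNIV (\<lambda>(c::real, x::'a). scaleR c x)
   \<and> (\<forall>W::'a set. open W \<and> 0 \<in> W \<longrightarrow> (\<exists>V. open V \<and> convex V \<and> 0 \<in> V \<and> V \<subseteq> W))"

definition edom :: "('a \<Rightarrow> ereal) \<Rightarrow> 'a set" where
  "edom f = {x. f x < \<infinity>}"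

definition epi :: "('a \<Rightarrow> ereal) \<Rightarrow> ('a \<times> real) set" where
  "epi f = {(x, r). f x \<le> ereal r}"

definition proper :: "('a \<Rightarrow> ereal) \<Rightarrow> bool" where
  "proper f \<longleftrightarrow> edom f \<noteq> {} \<and> (\<forall>x. f x > -\<infinity>)"

definition epi_on :: "('a \<Rightarrow> ereal) \<Rightarrow> 'a set \<Rightarrow> ('a \<times> real) set" where
  "epi_on f U = {(u, r). u \<in> U \<and> f u \<le> ereal r}"

text \<open>The closure function f_U bar: its epigraph is the closure of epi f_U.\<close>
definition fbar :: "('a::topological_space \<Rightarrow> ereal) \<Rightarrow> 'a set \<Rightarrow> 'a \<Rightarrow> ereal" where
  "fbar f U x = Inf {ereal r | r. (x, r) \<in> closure (epi_on f U)}"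

text \<open>Nets are represented by (proper) filters: a net (x_i) in S converging to x
  corresponds to its eventuality filter F, with F \<noteq> bot, F \<le> nhds x, eventually x_i \<in> S.\<close>
definition lsc_at_within :: "('a::topological_space \<Rightarrow> ereal) \<Rightarrow> 'a set \<Rightarrow> 'a \<Rightarrow> bool" where
  "lsc_at_within f S x \<longleftrightarrow>
     (\<forall>F. F \<noteq> bot \<and> F \<le> nhds x \<and> eventually (\<lambda>y. y \<in> S) F \<longrightarrow> f x \<le> Liminf F f)"

definition lsc_on :: "'a set \<Rightarrow> ('a::topological_space \<Rightarrow> ereal) \<Rightarrow> bool" where
  "lsc_on S f \<longleftrightarrow> (\<forall>x\<in>S. lsc_at_within f S x)"

definition graph_dense :: "('a::topological_space \<Rightarrow> ereal) \<Rightarrow> 'a set \<Rightarrow> bool" where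
  "graph_dense g U \<longleftrightarrow> U \<subseteq> edom g \<and>
     (\<forall>x\<in>edom g. \<exists>F. F \<noteq> bot \<and> F \<le> nhds x \<and> eventually (\<lambda>y. y \<in> U) F \<and> (g \<longlongrightarrow> g x) F)"

definition escale :: "real \<Rightarrow> ereal \<Rightarrow> ereal" where
  "escale t a = (if t = 0 then (if a = \<infinity> then \<infinity> else 0) else ereal t * a)"

text \<open>Convexity on a (not necessarily convex) set U; ereal addition already has
  (+inf) + (-inf) = +inf.\<close>
definition convex_on_set :: "'a::real_vector set \<Rightarrow> ('a \<Rightarrow> ereal) \<Rightarrow> bool" where
  "convex_on_set U f \<longleftrightarrow> (\<forall>u\<in>U. \<forall>v\<in>U. \<forall>t::real. 0 \<le> t \<and> t \<le> 1 \<and> (1 - t) *\<^sub>R u + t *\<^sub>R v \<in> U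
      \<longrightarrow> f ((1 - t) *\<^sub>R u + t *\<^sub>R v) \<le> escale (1 - t) (f u) + escale t (f v))"

definition self_segment_dense :: "'a::{real_vector,topological_space} set \<Rightarrow> 'a set \<Rightarrow> bool" where
  "self_segment_dense U V \<longleftrightarrow> convex V \<and> U \<subseteq> V \<and> V \<subseteq> closure U \<and>
     (\<forall>x\<in>U. \<forall>y\<in>U. closed_segment x y \<subseteq> closure (closed_segment x y \<inter> U))"

end

theory Submission
  imports Defs
begin


lemma lc_tendsto_add:
  fixes g h :: "'b \<Rightarrow> 'a::{real_vector,t2_space}"
  assumes X: "lctvs TYPE('a)" and "(g \<longlongrightarrow> a) F" "(h \<longlongrightarrow> b) F"
  shows "((\<lambda>x. g x + h x) \<longlongrightarrow> a + b) F"
proof -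
  have "isCont (\<lambda>(x::'a, y::'a). x + y) (a, b)"
    using X unfolding lctvs_def using continuous_on_eq_continuous_at[OF open_UNIV] by blast
  from isCont_tendsto_compose[OF this tendsto_Pair[OF assms(2,3)]] show ?thesis by simp
qed

lemma lc_tendsto_scaleR:
  fixes g :: "'b \<Rightarrow> 'a::{real_vector,t2_space}" and c :: "'b \<Rightarrow> real"
  assumes X: "lctvs TYPE('a)" and "(c \<longlongrightarrow> c0) F" "(g \<longlongrightarrow> a) F"
  shows "((\<lambda>x. c x *\<^sub>R g x) \<longlongrightarrow> c0 *\<^sub>R a) F"
proof -
  have "isCont (\<lambda>(c::real, x::'a). c *\<^sub>R x) (c0, a)"
    using X unfolding lctvs_def using continuous_on_eq_continuous_at[OF open_UNIV] by blast
  from isCont_tendsto_compose[OF this tendsto_Pair[OF assms(2,3)]] show ?thesis by simp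
qed

lemma lc_tendsto_add_prod:
  fixes g h :: "'b \<Rightarrow> 'a::{real_vector,t2_space} \<times> real"
  assumes X: "lctvs TYPE('a)" and "(g \<longlongrightarrow> a) F" "(h \<longlongrightarrow> b) F"
  shows "((\<lambda>x. g x + h x) \<longlongrightarrow> a + b) F"
proof -
  have "((\<lambda>x. (fst (g x) + fst (h x), snd (g x) + snd (h x))) \<longlongrightarrow> (fst a + fst b, snd a + snd b)) F"
    by (intro tendsto_Pair lc_tendsto_add[OF X] tendsto_add tendsto_fst tendsto_snd assms(2,3))
  then show ?thesis by (simp add: plus_prod_def)
qed

lemma lc_tendsto_scaleR_prod:
  fixes g :: "'b \<Rightarrow> 'a::{real_vector,t2_space} \<times> real" and c :: "'b \<Rightarrow> real"
  assumes X: "lctvs TYPE('a)" and "(c \<longlongrightarrow> c0) F" "(g \<longlongrightarrow> a) F"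
  shows "((\<lambda>x. c x *\<^sub>R g x) \<longlongrightarrow> c0 *\<^sub>R a) F"
proof -
  have "((\<lambda>x. (c x *\<^sub>R fst (g x), c x * snd (g x))) \<longlongrightarrow> (c0 *\<^sub>R fst a, c0 * snd a)) F"
    by (intro tendsto_Pair lc_tendsto_scaleR[OF X] tendsto_mult tendsto_fst tendsto_snd assms(2,3))
  then show ?thesis by (simp add: scaleR_prod_def)
qed

lemma lc_seg_cont:
  fixes u v :: "'a::{real_vector,t2_space}"
  assumes X: "lctvs TYPE('a)"
  shows "continuous_on S (\<lambda>t::real. (1-t) *\<^sub>R u + t *\<^sub>R v)"
  unfolding continuous_on_def
  by (intro ballI lc_tendsto_add[OF X] lc_tendsto_scaleR[OF X] tendsto_diff tendsto_const tendsto_ident_at)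

lemma lc_seg_cont_prod:
  fixes p q :: "'a::{real_vector,t2_space} \<times> real"
  assumes X: "lctvs TYPE('a)"
  shows "continuous_on S (\<lambda>t::real. (1-t) *\<^sub>R p + t *\<^sub>R q)"
  unfolding continuous_on_def
  by (intro ballI lc_tendsto_add_prod[OF X] lc_tendsto_scaleR_prod[OF X] tendsto_diff tendsto_const tendsto_ident_at)

lemma lc_comb_cont_prod:
  fixes t :: real
  assumes X: "lctvs TYPE('a::{real_vector,t2_space})"
  shows "continuous_on S (\<lambda>(p::'a \<times> real, q). (1-t) *\<^sub>R p + t *\<^sub>R q)"
  unfolding continuous_on_def split_beta
  by (intro ballI lc_tendsto_add_prod[OF X] lc_tendsto_scaleR_prod[OF X] tendsto_const tendsto_fst tendsto_snd tendsto_ident_at)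

lemma param_closure:
  fixes u v :: "'a::{real_vector,t2_space}"
  assumes X: "lctvs TYPE('a)" and seg: "closed_segment u v \<subseteq> closure (closed_segment u v \<inter> U)"
    and t: "0 \<le> t" "t \<le> 1"
  shows "t \<in> closure {s\<in>{0..1}. (1-s) *\<^sub>R u + s *\<^sub>R v \<in> U}"
proof (cases "u = v")
  case True
  have "(1-s) *\<^sub>R u + s *\<^sub>R v = u" for s by (simp add: True algebra_simps)
  moreover have "u \<in> U"
  proof -
    have "u \<in> closed_segment u v" by simp
    with seg have "u \<in> closure ({u} \<inter> U)" using True by auto
    then show ?thesis by (cases "u \<in> U") auto
  qed
  ultimately have "{s\<in>{0..1}. (1-s) *\<^sub>R u + s *\<^sub>R v \<in> U} = {0..1}" by auto
  then show ?thesis using t closure_subset by fastforce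
next
  case False
  define g where "g = (\<lambda>s::real. (1-s) *\<^sub>R u + s *\<^sub>R v)"
  define T where "T = {s\<in>{0..1}. g s \<in> U}"
  show ?thesis
  proof (rule ccontr)
    assume "t \<notin> closure {s\<in>{0..1}. (1-s) *\<^sub>R u + s *\<^sub>R v \<in> U}"
    then have "t \<notin> closure T" unfolding T_def g_def .
    then obtain e where e: "e > 0" "\<forall>y\<in>T. \<not> dist y t < e" unfolding closure_approachable by auto
    define K where "K = {0..1::real} - ball t e"
    have T_K: "T \<subseteq> K" using e unfolding K_def T_def by (auto simp: dist_commute)
    have "compact K" unfolding K_def by (intro compact_diff) auto
    then have cK: "closed (g ` K)" 
      by (intro compact_imp_closed compact_continuous_image) (auto simp: g_def intro: lc_seg_cont[OF X])
    have inj: "g s = g t \<Longrightarrow> s = t" for s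
    proof -
      assume "g s = g t"
      then have "(s - t) *\<^sub>R (v - u) = 0" unfolding g_def by (simp add: algebra_simps)
      then show "s = t" using False by auto
    qed
    have "g t \<notin> g ` K" using inj e(1) unfolding K_def by auto
    moreover have "closed_segment u v \<inter> U \<subseteq> g ` K"
    proof
      fix z assume "z \<in> closed_segment u v \<inter> U"
      then obtain s where "0 \<le> s" "s \<le> 1" "z = g s" "z \<in> U" unfolding closed_segment_def g_def by auto
      then have "s \<in> T" unfolding T_def by auto
      then show "z \<in> g ` K" using T_K \<open>z = g s\<close> by auto
    qed
    then have "closure (closed_segment u v \<inter> U) \<subseteq> g ` K" using cK by (simp add: closure_minimal)
    moreover have "g t \<in> closed_segment u v" using t unfolding closed_segment_def g_def by auto
    ultimately show False using seg by auto
  qed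
qed



lemma C_up:
  fixes f :: "'a::topological_space \<Rightarrow> ereal"
  assumes "(x, a) \<in> closure (epi_on f U)" "a \<le> b"
  shows "(x, b) \<in> closure (epi_on f U)"
proof -
  define \<tau> where "\<tau> = (\<lambda>p::'a \<times> real. (fst p, snd p + (b - a)))"
  have "continuous_on (closure (epi_on f U)) \<tau>" unfolding \<tau>_def by (intro continuous_intros)
  moreover have "\<tau> ` epi_on f U \<subseteq> closure (epi_on f U)"
  proof
    fix z assume "z \<in> \<tau> ` epi_on f U"
    then obtain y r where "y \<in> U" "f y \<le> ereal r" "z = (y, r + (b - a))"
      unfolding \<tau>_def epi_on_def by auto
    moreover have "ereal r \<le> ereal (r + (b - a))" using assms(2) by simp
    ultimately have "z \<in> epi_on f U" unfolding epi_on_def using order_trans by fastforce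
    then show "z \<in> closure (epi_on f U)" using closure_subset by blast
  qed
  ultimately have "\<tau> ` closure (epi_on f U) \<subseteq> closure (epi_on f U)"
    by (intro image_closure_subset) auto
  then show ?thesis using assms(1) unfolding \<tau>_def by force
qed

lemma C_down:
  fixes f :: "'a::topological_space \<Rightarrow> ereal"
  assumes "\<And>r'. r' > r \<Longrightarrow> (x, r') \<in> closure (epi_on f U)"
  shows "(x, r) \<in> closure (epi_on f U)"
proof (rule Lim_in_closed_set[of _ "\<lambda>r'. (x, r')" "at_right r"])
  show "\<forall>\<^sub>F r' in at_right r. (x, r') \<in> closure (epi_on f U)"
    using assms eventually_at_right_less[of r] by (auto elim: eventually_mono)
  show "((\<lambda>r'. (x, r')) \<longlongrightarrow> (x, r)) (at_right r)"
    by (intro tendsto_Pair tendsto_const) (simp add: tendsto_ident_at)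
qed auto

lemma fbar_le: "(x, r) \<in> closure (epi_on f U) \<Longrightarrow> fbar f U x \<le> ereal r"
  unfolding fbar_def by (rule Inf_lower) auto

lemma fbar_less: 
  fixes f :: "'a::topological_space \<Rightarrow> ereal"
  assumes "fbar f U x < ereal r" shows "\<exists>r0<r. (x, r0) \<in> closure (epi_on f U)"
proof -
  from assms obtain s where "s \<in> {ereal r | r. (x, r) \<in> closure (epi_on f U)}" "s < ereal r"
    unfolding fbar_def Inf_less_iff by blast
  then show ?thesis by auto
qed

lemma fbar_less_C:
  fixes f :: "'a::topological_space \<Rightarrow> ereal"
  assumes "fbar f U x < ereal r" shows "(x, r) \<in> closure (epi_on f U)"
  using fbar_less[OF assms] C_up by (metis less_imp_le)

lemma epi_fbar:
  fixes f :: "'a::topological_space \<Rightarrow> ereal"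
  shows "epi (fbar f U) = closure (epi_on f U)"
proof
  show "epi (fbar f U) \<subseteq> closure (epi_on f U)"
  proof
    fix z assume "z \<in> epi (fbar f U)"
    then obtain x r where z: "z = (x, r)" "fbar f U x \<le> ereal r" unfolding epi_def by auto
    have "(x, r) \<in> closure (epi_on f U)"
    proof (rule C_down)
      fix r' assume "r' > r"
      then have "fbar f U x < ereal r'" using z(2) by (metis ereal_less(2) order_le_less_trans less_ereal.simps(1))
      then show "(x, r') \<in> closure (epi_on f U)" by (rule fbar_less_C)
    qed
    then show "z \<in> closure (epi_on f U)" using z by simp
  qed
  show "closure (epi_on f U) \<subseteq> epi (fbar f U)"
    unfolding epi_def using fbar_le by fastforce
qed

lemma closed_C: "closed (closure (epi_on f U))" by simp

lemma key_point:
  fixes f :: "'a::topological_space \<Rightarrow> ereal"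
  assumes "open N" "x \<in> N" "fbar f U x < ereal r"
  shows "\<exists>u\<in>U \<inter> N. f u < ereal r"
proof -
  obtain r0 where r0: "r0 < r" "(x, r0) \<in> closure (epi_on f U)" using fbar_less[OF assms(3)] by blast
  have "open (N \<times> {r0 - 1 <..< r})" using assms(1) by (intro open_Times) auto
  moreover have "(x, r0) \<in> N \<times> {r0 - 1 <..< r}" using assms(2) r0(1) by auto
  ultimately have "N \<times> {r0 - 1 <..< r} \<inter> epi_on f U \<noteq> {}"
    using open_Int_closure_eq_empty r0(2) by blast
  then obtain u p where "u \<in> N" "p < r" "u \<in> U" "f u \<le> ereal p" unfolding epi_on_def by auto
  then have "f u < ereal r" using le_less_trans less_ereal.simps(1) by metis
  then show ?thesis using \<open>u \<in> N\<close> \<open>u \<in> U\<close> by blast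
qed

lemma filter_exists:
  fixes f :: "'a::topological_space \<Rightarrow> ereal"
  assumes "fbar f U x < \<infinity>"
  shows "\<exists>G. G \<noteq> bot \<and> G \<le> nhds x \<and> eventually (\<lambda>y. y \<in> U) G
            \<and> (\<forall>r. fbar f U x < ereal r \<longrightarrow> eventually (\<lambda>y. f y < ereal r) G)"
proof -
  define B where "B = {(N, r). open N \<and> x \<in> N \<and> fbar f U x < ereal r}"
  define P where "P = (\<lambda>(N, r). principal {u. u \<in> U \<and> u \<in> N \<and> f u < ereal r})"
  define G where "G = (INF b\<in>B. P b)"
  obtain r1 where r1: "fbar f U x < ereal r1" using assms ereal_dense2 by (metis less_ereal.simps(4))
  then have Bne: "B \<noteq> {}" unfolding B_def by auto
  have ev: "eventually Q G \<longleftrightarrow> (\<exists>b\<in>B. eventually Q (P b))" for Q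
    unfolding G_def
  proof (rule eventually_INF_base[OF Bne])
    fix a b assume "a \<in> B" "b \<in> B"
    then obtain N1 r1 N2 r2 where "a = (N1, r1)" "b = (N2, r2)" "open N1" "open N2" "x \<in> N1" "x \<in> N2"
      "fbar f U x < ereal r1" "fbar f U x < ereal r2" unfolding B_def by auto
    then show "\<exists>c\<in>B. P c \<le> inf (P a) (P b)"
      by (intro bexI[of _ "(N1 \<inter> N2, min r1 r2)"]) (auto simp: B_def P_def min_le_iff_disj intro: less_le_trans[of _ "ereal (min r1 r2)"])
  qed
  have "G \<noteq> bot"
  proof
    assume "G = bot"
    then have "eventually (\<lambda>_. False) G" by simp
    then obtain N r where "open N" "x \<in> N" "fbar f U x < ereal r"
      "eventually (\<lambda>_. False) (principal {u. u \<in> U \<and> u \<in> N \<and> f u < ereal r})"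
      unfolding ev B_def P_def by auto
    then show False using key_point[of N x f U r] by (auto simp: eventually_principal)
  qed
  moreover have "G \<le> nhds x" unfolding le_nhds
  proof (intro allI impI)
    fix S assume "open S \<and> x \<in> S"
    then show "eventually (\<lambda>y. y \<in> S) G" unfolding ev using r1
      by (intro bexI[of _ "(S, r1)"]) (auto simp: B_def P_def eventually_principal)
  qed
  moreover have "eventually (\<lambda>y. y \<in> U) G" unfolding ev using r1
      by (intro bexI[of _ "(UNIV, r1)"]) (auto simp: B_def P_def eventually_principal)
  moreover have "\<forall>r. fbar f U x < ereal r \<longrightarrow> eventually (\<lambda>y. f y < ereal r) G"
    unfolding ev by (auto intro!: bexI[of _ "(UNIV, _)"] simp: B_def P_def eventually_principal)
  ultimately show ?thesis by blast
qed



lemma id_tendsto_le: "F \<le> nhds x \<Longrightarrow> ((\<lambda>y. y) \<longlongrightarrow> x) F"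
  unfolding filterlim_def by simp

lemma fbar_lsc:
  fixes f :: "'a::topological_space \<Rightarrow> ereal"
  shows "lsc_on UNIV (fbar f U)"
  unfolding lsc_on_def lsc_at_within_def
proof (intro ballI allI impI)
  fix x and F :: "'a filter"
  assume F: "F \<noteq> bot \<and> F \<le> nhds x \<and> eventually (\<lambda>y. y \<in> UNIV) F"
  show "fbar f U x \<le> Liminf F (fbar f U)"
    unfolding le_Liminf_iff
  proof (intro allI impI, rule ccontr)
    fix y assume y: "y < fbar f U x" and ne: "\<not> eventually (\<lambda>z. y < fbar f U z) F"
    obtain r where r: "y < ereal r" "ereal r < fbar f U x" using ereal_dense2[OF y] by blast
    define F' where "F' = inf F (principal {z. fbar f U z < ereal r})"
    have "F' \<noteq> bot"
    proof
      assume "F' = bot"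
      then have "eventually (\<lambda>_. False) F'" by simp
      then have "eventually (\<lambda>z. ereal r \<le> fbar f U z) F"
        unfolding F'_def eventually_inf_principal by (auto elim: eventually_mono simp: not_less)
      then have "eventually (\<lambda>z. y < fbar f U z) F"
        by (rule eventually_mono) (use r in auto)
      with ne show False by simp
    qed
    have "(x, r) \<in> closure (epi_on f U)"
    proof (rule Lim_in_closed_set[of _ "\<lambda>z. (z, r)" F'])
      show "\<forall>\<^sub>F z in F'. (z, r) \<in> closure (epi_on f U)"
        unfolding F'_def eventually_inf_principal by (rule always_eventually) (auto intro: fbar_less_C)
      have "F' \<le> nhds x" using F unfolding F'_def by (meson inf.coboundedI1)
      then show "((\<lambda>z. (z, r)) \<longlongrightarrow> (x, r)) F'"
        by (intro tendsto_Pair tendsto_const id_tendsto_le)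
    qed (use \<open>F' \<noteq> bot\<close> in auto)
    then have "fbar f U x \<le> ereal r" by (rule fbar_le)
    with r show False by simp
  qed
qed

lemma fbar_le_f:
  fixes f :: "'a::topological_space \<Rightarrow> ereal"
  assumes "proper f" "U \<subseteq> edom f" "u \<in> U"
  shows "fbar f U u \<le> f u"
proof -
  have "f u < \<infinity>" "f u > -\<infinity>" using assms unfolding proper_def edom_def by auto
  then obtain a where a: "f u = ereal a" by (cases "f u") auto
  then have "(u, a) \<in> epi_on f U" using assms(3) unfolding epi_on_def by auto
  then have "fbar f U u \<le> ereal a" using closure_subset fbar_le by blast
  then show ?thesis using a by simp
qed

lemma lsc_bound:
  fixes f :: "'a \<Rightarrow> ereal"
  assumes "G \<noteq> bot" "f x \<le> Liminf G f" "\<forall>r. a < ereal r \<longrightarrow> eventually (\<lambda>y. f y < ereal r) G"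
  shows "f x \<le> a"
proof (rule dense_ge)
  fix y assume "a < y"
  then obtain r where r: "a < ereal r" "ereal r < y" using ereal_dense2 by blast
  have "f x \<le> ereal r"
  proof (rule ccontr)
    assume "\<not> f x \<le> ereal r"
    then have "ereal r < f x" by simp
    then have "eventually (\<lambda>z. ereal r < f z) G" using assms(2) unfolding le_Liminf_iff by blast
    moreover have "eventually (\<lambda>z. f z < ereal r) G" using assms(3) r by blast
    ultimately have "eventually (\<lambda>_. False) G" by (auto elim: eventually_elim2)
    then show False using assms(1) by simp
  qed
  then show "f x \<le> y" using r by simp
qed


lemma partA:
  fixes f :: "'a::topological_space \<Rightarrow> ereal"
  assumes proper: "proper f" and U_sub: "U \<subseteq> edom f"
  shows "lsc_on UNIV (fbar f U) \<and> graph_dense (fbar f U) U \<and> (INF x\<in>U. f x) = (INF x. fbar f U x)"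
proof (intro conjI)
  show lsc: "lsc_on UNIV (fbar f U)" by (rule fbar_lsc)
  show "graph_dense (fbar f U) U" unfolding graph_dense_def
  proof (intro conjI ballI)
    show "U \<subseteq> edom (fbar f U)"
    proof
      fix u assume "u \<in> U"
      then have "fbar f U u \<le> f u" "f u < \<infinity>" using fbar_le_f[OF proper U_sub] U_sub
        unfolding edom_def by auto
      then show "u \<in> edom (fbar f U)" unfolding edom_def by auto
    qed
    fix x assume "x \<in> edom (fbar f U)"
    then have "fbar f U x < \<infinity>" unfolding edom_def by simp
    from filter_exists[OF this] obtain G where G: "G \<noteq> bot" "G \<le> nhds x" "eventually (\<lambda>y. y \<in> U) G"
      "\<forall>r. fbar f U x < ereal r \<longrightarrow> eventually (\<lambda>y. f y < ereal r) G" by blast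
    have liminf: "fbar f U x \<le> Liminf G (fbar f U)"
      using lsc G unfolding lsc_on_def lsc_at_within_def by auto
    have "(fbar f U \<longlongrightarrow> fbar f U x) G" unfolding order_tendsto_iff
    proof (intro conjI allI impI)
      fix l assume "l < fbar f U x"
      then show "eventually (\<lambda>y. l < fbar f U y) G" using liminf unfolding le_Liminf_iff by blast
    next
      fix b assume "fbar f U x < b"
      then obtain r where r: "fbar f U x < ereal r" "ereal r < b" using ereal_dense2 by blast
      have "eventually (\<lambda>y. f y < ereal r \<and> y \<in> U) G" using G(3,4) r(1) by (auto elim: eventually_elim2)
      then show "eventually (\<lambda>y. fbar f U y < b) G"
      proof (rule eventually_mono)
        fix y assume "f y < ereal r \<and> y \<in> U"
        then show "fbar f U y < b" using fbar_le_f[OF proper U_sub, of y] r(2) by auto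
      qed
    qed
    then show "\<exists>F. F \<noteq> bot \<and> F \<le> nhds x \<and> eventually (\<lambda>y. y \<in> U) F \<and> (fbar f U \<longlongrightarrow> fbar f U x) F"
      using G by blast
  qed
  show "(INF x\<in>U. f x) = (INF x. fbar f U x)"
  proof (rule antisym)
    show "(INF x\<in>U. f x) \<le> (INF x. fbar f U x)"
    proof (rule INF_greatest)
      fix x
      show "(INF x\<in>U. f x) \<le> fbar f U x"
      proof (rule dense_ge)
        fix y assume "fbar f U x < y"
        then obtain r where r: "fbar f U x < ereal r" "ereal r < y" using ereal_dense2 by blast
        obtain u where "u \<in> U" "f u < ereal r" using key_point[OF open_UNIV _ r(1)] by blast
        then have "(INF x\<in>U. f x) \<le> f u" by (simp add: INF_lower)
        then show "(INF x\<in>U. f x) \<le> y" using \<open>f u < ereal r\<close> r(2) by simp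
      qed
    qed
    show "(INF x. fbar f U x) \<le> (INF x\<in>U. f x)"
    proof (rule INF_greatest)
      fix u assume u: "u \<in> U"
      have "(INF x. fbar f U x) \<le> fbar f U u" by (rule INF_lower) simp
      also have "\<dots> \<le> f u" by (rule fbar_le_f[OF proper U_sub u])
      finally show "(INF x. fbar f U x) \<le> f u" .
    qed
  qed
qed


lemma partB1:
  fixes f :: "'a::topological_space \<Rightarrow> ereal"
  assumes proper: "proper f" and U_sub: "U \<subseteq> edom f" and lsc: "lsc_on U f"
  shows "\<forall>u\<in>U. f u = fbar f U u"
proof
  fix u assume u: "u \<in> U"
  have le: "fbar f U u \<le> f u" by (rule fbar_le_f[OF proper U_sub u])
  have "f u < \<infinity>" using U_sub u unfolding edom_def by auto
  with le have "fbar f U u < \<infinity>" by (rule le_less_trans)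
  from filter_exists[OF this] obtain G where G: "G \<noteq> bot" "G \<le> nhds u" "eventually (\<lambda>y. y \<in> U) G"
      "\<forall>r. fbar f U u < ereal r \<longrightarrow> eventually (\<lambda>y. f y < ereal r) G" by blast
  have "f u \<le> Liminf G f" using lsc u G unfolding lsc_on_def lsc_at_within_def by auto
  then have "f u \<le> fbar f U u" by (rule lsc_bound[OF G(1) _ G(4)])
  with le show "f u = fbar f U u" by simp
qed

lemma partB2:
  fixes f :: "'a::topological_space \<Rightarrow> ereal"
  assumes proper: "proper f" and U_sub: "U \<subseteq> edom f" and lsc: "lsc_on UNIV f"
  shows "edom (fbar f U) \<subseteq> edom f \<and> (\<forall>x. f x \<le> fbar f U x) \<and> (fbar f U = f \<longleftrightarrow> graph_dense f U)"
proof -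
  have ge: "f x \<le> fbar f U x" for x
  proof (cases "fbar f U x < \<infinity>")
    case True
    from filter_exists[OF this] obtain G where G: "G \<noteq> bot" "G \<le> nhds x" "eventually (\<lambda>y. y \<in> U) G"
      "\<forall>r. fbar f U x < ereal r \<longrightarrow> eventually (\<lambda>y. f y < ereal r) G" by blast
    have "f x \<le> Liminf G f" using lsc G unfolding lsc_on_def lsc_at_within_def by auto
    then show ?thesis by (rule lsc_bound[OF G(1) _ G(4)])
  qed auto
  have "edom (fbar f U) \<subseteq> edom f"
  proof
    fix x assume "x \<in> edom (fbar f U)"
    then have "fbar f U x < \<infinity>" by (simp add: edom_def)
    then have "f x < \<infinity>" by (rule le_less_trans[OF ge])
    then show "x \<in> edom f" by (simp add: edom_def)
  qed
  moreover have "fbar f U = f \<longleftrightarrow> graph_dense f U"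
  proof
    assume "fbar f U = f"
    moreover have "graph_dense (fbar f U) U" using partA[OF proper U_sub] by blast
    ultimately show "graph_dense f U" by simp
  next
    assume gd: "graph_dense f U"
    show "fbar f U = f"
    proof
      fix x
      have "fbar f U x \<le> f x"
      proof (cases "x \<in> edom f")
        case False then show ?thesis unfolding edom_def by simp
      next
        case True
        then obtain F where F: "F \<noteq> bot" "F \<le> nhds x" "eventually (\<lambda>y. y \<in> U) F" "(f \<longlongrightarrow> f x) F"
          using gd unfolding graph_dense_def by blast
        have "f x < \<infinity>" "f x > -\<infinity>" using True proper unfolding proper_def edom_def by auto
        then obtain a where a: "f x = ereal a" by (cases "f x") auto
        have "(x, a) \<in> closure (epi_on f U)"
        proof (rule C_down)
          fix r assume "r > a"
          show "(x, r) \<in> closure (epi_on f U)"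
          proof (rule Lim_in_closed_set[of _ "\<lambda>z. (z, r)" F])
            have "eventually (\<lambda>y. f y < ereal r) F" using F(4) \<open>r > a\<close> a unfolding order_tendsto_iff by auto
            with F(3) show "\<forall>\<^sub>F z in F. (z, r) \<in> closure (epi_on f U)"
              proof eventually_elim
              case (elim z)
              then have "(z, r) \<in> epi_on f U" unfolding epi_on_def by auto
              then show ?case using closure_subset by blast
            qed
            show "((\<lambda>z. (z, r)) \<longlongrightarrow> (x, r)) F"
              by (intro tendsto_Pair tendsto_const id_tendsto_le F(2))
          qed (use F in auto)
        qed
        then show ?thesis using fbar_le[of x a f U] a by simp
      qed
      with ge[of x] show "fbar f U x = f x" by simp
    qed
  qed
  ultimately show ?thesis using ge by blast
qed



lemma escale_ereal[simp]: "escale c (ereal x) = ereal (c * x)"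
  by (simp add: escale_def)

lemma segE:
  fixes f :: "'a::{real_vector,t2_space} \<Rightarrow> ereal"
  assumes X: "lctvs TYPE('a)" and proper: "proper f" and U_sub: "U \<subseteq> edom f"
    and conv: "convex_on_set U f"
    and segU: "\<forall>x\<in>U. \<forall>y\<in>U. closed_segment x y \<subseteq> closure (closed_segment x y \<inter> U)"
    and p: "p \<in> epi_on f U" and q: "q \<in> epi_on f U"
  shows "closed_segment p q \<subseteq> closure (closed_segment p q \<inter> epi_on f U)"
proof
  obtain u a where pa: "p = (u, a)" "u \<in> U" "f u \<le> ereal a" using p unfolding epi_on_def by auto
  obtain v b where qb: "q = (v, b)" "v \<in> U" "f v \<le> ereal b" using q unfolding epi_on_def by auto
  have "f u > -\<infinity>" "f v > -\<infinity>" using proper unfolding proper_def by auto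
  then obtain fu fv where fu: "f u = ereal fu" and fv: "f v = ereal fv" using pa(3) qb(3)
    by (cases "f u"; cases "f v") auto
  have fua: "fu \<le> a" and fvb: "fv \<le> b" using pa(3) qb(3) fu fv by auto
  define H where "H = (\<lambda>s::real. (1-s) *\<^sub>R p + s *\<^sub>R q)"
  define T where "T = {s\<in>{0..1}. (1-s) *\<^sub>R u + s *\<^sub>R v \<in> U}"
  fix z assume "z \<in> closed_segment p q"
  then obtain t where t: "0 \<le> t" "t \<le> 1" "z = H t" unfolding closed_segment_def H_def by auto
  have tT: "t \<in> closure T" unfolding T_def
    by (rule param_closure[OF X _ t(1,2)]) (use segU pa(2) qb(2) in auto)
  have "H ` T \<subseteq> closed_segment p q \<inter> epi_on f U"
  proof
    fix y assume "y \<in> H ` T"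
    then obtain s where s: "s \<in> T" "y = H s" by auto
    then have s01: "0 \<le> s" "s \<le> 1" and sU: "(1-s) *\<^sub>R u + s *\<^sub>R v \<in> U" unfolding T_def by auto
    have yseg: "y \<in> closed_segment p q" using s01 s(2) unfolding closed_segment_def H_def by auto
    have "f ((1-s) *\<^sub>R u + s *\<^sub>R v) \<le> escale (1-s) (f u) + escale s (f v)"
      using conv pa(2) qb(2) s01 sU unfolding convex_on_set_def by blast
    moreover have "(1-s) * fu + s * fv \<le> (1-s) * a + s * b"
      using fua fvb s01 by (intro add_mono mult_left_mono) auto
    ultimately have "f ((1-s) *\<^sub>R u + s *\<^sub>R v) \<le> ereal ((1-s) * a + s * b)"
      using fu fv by (metis escale_ereal ereal_less_eq(3) order_trans plus_ereal.simps(1))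
    moreover have "y = ((1-s) *\<^sub>R u + s *\<^sub>R v, (1-s) * a + s * b)"
      using s(2) pa(1) qb(1) unfolding H_def by simp
    ultimately have "y \<in> epi_on f U" using sU unfolding epi_on_def by auto
    with yseg show "y \<in> closed_segment p q \<inter> epi_on f U" by blast
  qed
  then have "H ` T \<subseteq> closure (closed_segment p q \<inter> epi_on f U)" using closure_subset by blast
  then have "H ` closure T \<subseteq> closure (closed_segment p q \<inter> epi_on f U)"
    by (intro image_closure_subset) (auto simp: H_def intro: lc_seg_cont_prod[OF X])
  then show "z \<in> closure (closed_segment p q \<inter> epi_on f U)" using tT t(3) by auto
qed

lemma convC:
  fixes f :: "'a::{real_vector,t2_space} \<Rightarrow> ereal"
  assumes X: "lctvs TYPE('a)" and proper: "proper f" and U_sub: "U \<subseteq> edom f"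
    and conv: "convex_on_set U f"
    and segU: "\<forall>x\<in>U. \<forall>y\<in>U. closed_segment x y \<subseteq> closure (closed_segment x y \<inter> U)"
  shows "convex (closure (epi_on f U))"
  unfolding convex_def
proof (intro ballI allI impI)
  fix x y and c d :: real
  assume xy: "x \<in> closure (epi_on f U)" "y \<in> closure (epi_on f U)" and cd: "0 \<le> c" "0 \<le> d" "c + d = 1"
  define \<Phi> where "\<Phi> = (\<lambda>(p::'a \<times> real, q). (1-d) *\<^sub>R p + d *\<^sub>R q)"
  have "\<Phi> ` (epi_on f U \<times> epi_on f U) \<subseteq> closure (epi_on f U)"
  proof
    fix w assume "w \<in> \<Phi> ` (epi_on f U \<times> epi_on f U)"
    then obtain p q where pq: "p \<in> epi_on f U" "q \<in> epi_on f U" "w = (1-d) *\<^sub>R p + d *\<^sub>R q"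
      unfolding \<Phi>_def by auto
    have "w \<in> closed_segment p q" using pq(3) cd unfolding closed_segment_def by auto
    then have "w \<in> closure (closed_segment p q \<inter> epi_on f U)"
      using segE[OF X proper U_sub conv segU pq(1,2)] by blast
    then show "w \<in> closure (epi_on f U)" by (meson closure_mono inf_le2 subsetD)
  qed
  then have "\<Phi> ` closure (epi_on f U \<times> epi_on f U) \<subseteq> closure (epi_on f U)"
    by (intro image_closure_subset) (auto simp: \<Phi>_def intro: lc_comb_cont_prod[OF X])
  moreover have "(x, y) \<in> closure (epi_on f U \<times> epi_on f U)" using xy by (simp add: closure_Times)
  ultimately have "\<Phi> (x, y) \<in> closure (epi_on f U)" by blast
  moreover have "c = 1 - d" using cd by simp
  ultimately show "c *\<^sub>R x + d *\<^sub>R y \<in> closure (epi_on f U)" unfolding \<Phi>_def by simp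
qed



lemma convex_epi_imp:
  fixes g :: "'a::real_vector \<Rightarrow> ereal"
  assumes cv: "convex (epi g)"
  shows "convex_on_set UNIV g"
  unfolding convex_on_set_def
proof (intro ballI allI impI)
  fix u v :: 'a and t :: real
  assume "0 \<le> t \<and> t \<le> 1 \<and> (1 - t) *\<^sub>R u + t *\<^sub>R v \<in> UNIV"
  then have t: "0 \<le> t" "t \<le> 1" by auto
  define w where "w = (1 - t) *\<^sub>R u + t *\<^sub>R v"
  have comb: "g w \<le> ereal ((1-t) * r + t * s)" if "g u \<le> ereal r" "g v \<le> ereal s" for r s
  proof -
    have "(u, r) \<in> epi g" "(v, s) \<in> epi g" using that unfolding epi_def by auto
    then have "(1-t) *\<^sub>R (u, r) + t *\<^sub>R (v, s) \<in> epi g" using t by (intro convexD[OF cv]) auto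
    then show ?thesis unfolding epi_def w_def by simp
  qed
  show "g w \<le> escale (1 - t) (g u) + escale t (g v)"
  proof (cases "t = 0 \<or> t = 1")
    case True
    then show ?thesis
    proof
      assume "t = 0"
      then show ?thesis unfolding w_def escale_def by (cases "g v") auto
    next
      assume "t = 1"
      then show ?thesis unfolding w_def escale_def by (cases "g u") auto
    qed
  next
    case False
    then have t': "0 < t" "t < 1" using t by auto
    show ?thesis
    proof (cases "g u = \<infinity> \<or> g v = \<infinity>")
      case True
      then show ?thesis using t' unfolding escale_def by auto
    next
      case False
      then have gu: "g u < \<infinity>" and gv: "g v < \<infinity>" by (auto simp: less_top)
      have R: "escale (1 - t) (g u) + escale t (g v) = ereal (1-t) * g u + ereal t * g v"
        using t' unfolding escale_def by auto
      show ?thesis unfolding R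
      proof (rule dense_ge)
        fix y assume "ereal (1 - t) * g u + ereal t * g v < y"
        then obtain c where c: "ereal (1 - t) * g u + ereal t * g v < ereal c" "ereal c < y"
          using ereal_dense2 by blast
        have "\<exists>r s. g u \<le> ereal r \<and> g v \<le> ereal s \<and> (1-t) * r + t * s \<le> c"
        proof (cases "g u = -\<infinity>")
          case True
          obtain s where "g v < ereal s" using ereal_dense2[OF gv] by blast
          then show ?thesis using True t'
            by (intro exI[of _ "(c - t * s) / (1 - t)"] exI[of _ s]) auto
        next
          case gu': False
          show ?thesis
          proof (cases "g v = -\<infinity>")
            case True
            obtain r where "g u < ereal r" using ereal_dense2[OF gu] by blast
            then show ?thesis using True t'
              by (intro exI[of _ r] exI[of _ "(c - (1-t) * r) / t"]) (auto simp: field_simps)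
          next
            case False
            obtain a b where ab: "g u = ereal a" "g v = ereal b" using gu gv gu' False
              by (cases "g u"; cases "g v") auto
            define \<delta> where "\<delta> = c - ((1-t) * a + t * b)"
            have "\<delta> \<ge> 0" using c(1) ab unfolding \<delta>_def by simp
            then show ?thesis using ab
              by (intro exI[of _ "a + \<delta>"] exI[of _ "b + \<delta>"]) (auto simp: \<delta>_def algebra_simps)
          qed
        qed
        then obtain r s where "g u \<le> ereal r" "g v \<le> ereal s" "(1-t) * r + t * s \<le> c" by blast
        then have "g w \<le> ereal c" using comb by (meson ereal_less_eq(3) order_trans)
        then show "g w \<le> y" using c(2) by simp
      qed
    qed
  qed
qed


theorem mainTheorem4:
  fixes f :: "'a::{real_vector,t2_space} \<Rightarrow> ereal" and U :: "'a set"
  assumes X: "lctvs TYPE('a)"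
    and proper: "proper f"
    and U_sub: "U \<subseteq> edom f"
    and U_dense: "edom f \<subseteq> closure U"
  shows "(lsc_on UNIV (fbar f U)
          \<and> graph_dense (fbar f U) U
          \<and> (INF x\<in>U. f x) = (INF x. fbar f U x))
       \<and> (lsc_on U f \<longrightarrow> (\<forall>u\<in>U. f u = fbar f U u))
       \<and> (lsc_on U f \<and> lsc_on UNIV f \<longrightarrow>
           edom (fbar f U) \<subseteq> edom f \<and> (\<forall>x. f x \<le> fbar f U x)
           \<and> (fbar f U = f \<longleftrightarrow> graph_dense f U))
       \<and> (convex (edom f) \<and> self_segment_dense U (edom f) \<and> convex_on_set U f \<longrightarrow>
           convex_on_set UNIV (fbar f U) \<and> self_segment_dense (epi_on f U) (epi (fbar f U)))"
proof -
  have pA: "lsc_on UNIV (fbar f U) \<and> graph_dense (fbar f U) U \<and> (INF x\<in>U. f x) = (INF x. fbar f U x)"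
    by (rule partA[OF proper U_sub])
  have pB1: "lsc_on U f \<longrightarrow> (\<forall>u\<in>U. f u = fbar f U u)"
    using partB1[OF proper U_sub] by blast
  have pB2: "lsc_on U f \<and> lsc_on UNIV f \<longrightarrow> edom (fbar f U) \<subseteq> edom f \<and> (\<forall>x. f x \<le> fbar f U x) \<and> (fbar f U = f \<longleftrightarrow> graph_dense f U)"
    using partB2[OF proper U_sub] by blast
  have pC: "convex (edom f) \<and> self_segment_dense U (edom f) \<and> convex_on_set U f \<longrightarrow>
           convex_on_set UNIV (fbar f U) \<and> self_segment_dense (epi_on f U) (epi (fbar f U))"
  proof
    assume H: "convex (edom f) \<and> self_segment_dense U (edom f) \<and> convex_on_set U f"
    then have conv: "convex_on_set U f"
      and segU: "\<forall>x\<in>U. \<forall>y\<in>U. closed_segment x y \<subseteq> closure (closed_segment x y \<inter> U)"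
      unfolding self_segment_dense_def by auto
    have cC: "convex (epi (fbar f U))" unfolding epi_fbar by (rule convC[OF X proper U_sub conv segU])
    have "convex_on_set UNIV (fbar f U)" by (rule convex_epi_imp[OF cC])
    moreover have "self_segment_dense (epi_on f U) (epi (fbar f U))"
      unfolding self_segment_dense_def
    proof (intro conjI ballI)
      show "convex (epi (fbar f U))" by (rule cC)
      show "epi_on f U \<subseteq> epi (fbar f U)" unfolding epi_fbar by (rule closure_subset)
      show "epi (fbar f U) \<subseteq> closure (epi_on f U)" unfolding epi_fbar by simp
      fix p q assume "p \<in> epi_on f U" "q \<in> epi_on f U"
      then show "closed_segment p q \<subseteq> closure (closed_segment p q \<inter> epi_on f U)"
        by (rule segE[OF X proper U_sub conv segU])
    qed
    ultimately show "convex_on_set UNIV (fbar f U) \<and> self_segment_dense (epi_on f U) (epi (fbar f U))" ..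
  qed
  show ?thesis using pA pB1 pB2 pC by blast
qed

end
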